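(* In the mirror triangle method with stochastic $(\delta,L)$-oracle (see context), write $l_f^\delta(x;y)=f_\delta(y)+\langle\tilde\nabla^{m_{k+1}}f_\delta(y),x-y\rangle$. Then at every step $k+1$, for all $x\in Q$, $$l_f^\delta(x_{k+1};y_{k+1})+\frac{L_{k+1}}2\|x_{k+1}-y_{k+1}\|^2+h(x_{k+1})\le\frac{A_k}{A_{k+1}}\big(l_f^\delta(x_k;y_{k+1})+h(x_k)\big)+\frac{\alpha_{k+1}}{A_{k+1}}\Big(l_f^\delta(x;y_{k+1})+h(x)+\frac1{\alpha_{k+1}}V(x,u_k)-\frac1{\alpha_{k+1}}V(x,u_{k+1})\Big).$$
   Context: $\mathbb{R}^n$ carries the Euclidean norm; $Q$ closed convex, $D_Q\ge\max_{x,y\in Q}\|x-y\|$ finite; $f:Q\to\mathbb{R}$ convex with $L$-Lipschitz gradient; $h$ convex on $Q$. Prox-function $d$ ($C^1$, $1$-strongly convex), $V(x,y)=d(x)-d(y)-\langle\nabla d(y),x-y\rangle$. Stochastic $(\delta,L)$-oracle: for query $y\in Q$ returns $(f_\delta(y),\nabla f_\delta(y;\xi))$ such that for some vector $\nabla f_\delta(y)$: $0\le f(x)-f_\delta(y)-\langle\nabla f_\delta(y),x-y\rangle\le\frac L2\|x-y\|^2+\delta$ for all $x\in Q$; $\mathbb{E}\nabla f_\delta(y;\xi)=\nabla f_\delta(y)$; $\mathbb{E}\exp(\|\nabla f_\delta(y;\xi)-\nabla f_\delta(y)\|^2/D)\le e$ ($D>0$). Method with $x_0\in Q$, $\varepsilon>0$,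 $\beta\in(0,1)$: $N=\lceil2\sqrt3\sqrt LD_Q/\sqrt\varepsilon\rceil$, $\Omega=\sqrt{2\ln(N/\beta)}$, $\tilde\Omega=1+2\Omega+\Omega^2$; $y_0=u_0=x_0$, $L_1=L/2$, $\alpha_0=A_0=0$. Step $k+1$ with current $L_{k+1}$: (i) $\alpha_{k+1}$ largest root of $A_k+\alpha=L_{k+1}\alpha^2$, $A_{k+1}=A_k+\alpha_{k+1}$; (ii) $y_{k+1}=(\alpha_{k+1}u_k+A_kx_k)/A_{k+1}$; (iii) $m_{k+1}=\lceil3D\tilde\Omega\alpha_{k+1}/\varepsilon\rceil$, query the oracle $m_{k+1}$ times independently at $y_{k+1}$, $\tilde\nabla^{m_{k+1}}f_\delta(y_{k+1})=\frac1{m_{k+1}}\sum_j\nabla f_\delta(y_{k+1};\xi_j)$; (iv) $u_{k+1}=\arg\min_{x\in Q}\{V(x,u_k)+\alpha_{k+1}(f_\delta(y_{k+1})+\langle\tilde\nabla^{m_{k+1}}f_\delta(y_{k+1}),x-y_{k+1}\rangle+h(x))\}$; (v) $x_{k+1}=(\alpha_{k+1}u_{k+1}+A_kx_k)/A_{k+1}$; (vi) if $f_\delta(x_{k+1})\le f_\delta(y_{k+1})+\langle\tilde\nabla^{m_{k+1}}f_\delta(y_{k+1}),x_{k+1}-y_{k+1}\rangle+\frac{L_{k+1}}2\|x_{k+1}-y_{k+1}\|^2+\frac{3D\tilde\Omega}{L_{k+1}m_{k+1}}+\delta$, set $L_{k+2}=L_{k+1}/2$ and go on; otherwise replace $L_{k+1}$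 by $2L_{k+1}$ and repeat step $k+1$. *)

theory Defs
  imports "HOL-Analysis.Analysis"
begin

definition strongly_convex_on :: "'a::real_normed_vector set \<Rightarrow> real \<Rightarrow> ('a \<Rightarrow> real) \<Rightarrow> bool" where
  "strongly_convex_on S \<mu> d \<longleftrightarrow>
     (\<forall>x\<in>S. \<forall>y\<in>S. \<forall>t::real. 0 \<le> t \<and> t \<le> 1 \<longrightarrow>
        d ((1 - t) *\<^sub>R x + t *\<^sub>R y) \<le> (1 - t) * d x + t * d y - \<mu> / 2 * t * (1 - t) * (norm (x - y))\<^sup>2)"

definition bregman :: "('a::real_inner \<Rightarrow> real) \<Rightarrow> ('a \<Rightarrow> 'a) \<Rightarrow> 'a \<Rightarrow> 'a \<Rightarrow> real" where
  "bregman d gd x y = d x - d y - inner (gd y) (x - y)"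

text \<open>Stochastic linear model l(x;y) = f_delta(y) + <g, x - y> with g the minibatch gradient.\<close>
definition lmodel :: "real \<Rightarrow> 'a::real_inner \<Rightarrow> 'a \<Rightarrow> 'a \<Rightarrow> real" where
  "lmodel fy g y x = fy + inner g (x - y)"

end

theory Submission
  imports Defs
begin


lemma deriv_lower:
  fixes f :: "'a::real_normed_vector \<Rightarrow> real"
  assumes D: "(f has_derivative f') (at p within Q)"
    and cv: "convex Q" and p: "p \<in> Q" and q: "q \<in> Q"
    and H: "\<And>t. 0 < t \<Longrightarrow> t \<le> 1 \<Longrightarrow> t * a - t\<^sup>2 * b \<le> f (p + t *\<^sub>R (q - p)) - f p"
  shows "a \<le> f' (q - p)"
proof (rule ccontr)
  assume "\<not> a \<le> f' (q - p)"
  hence pos: "a - f' (q - p) > 0" by simp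
  define G where "G = f' (q - p)"
  define n where "n = norm (q - p)"
  have n0: "n \<ge> 0" by (simp add: n_def)
  have bl: "bounded_linear f'" using D by (simp add: has_derivative_within_alt)
  define e where "e = (a - G) / (2 * (n + 1))"
  have e0: "e > 0" using pos n0 by (simp add: e_def G_def)
  obtain \<delta> where \<delta>: "\<delta> > 0" and hd: "\<And>y. y \<in> Q \<Longrightarrow> norm (y - p) < \<delta> \<Longrightarrow>
      norm (f y - f p - f' (y - p)) \<le> e * norm (y - p)"
    using D e0 unfolding has_derivative_within_alt by blast
  define t where "t = min 1 (min (\<delta> / (n + 1)) ((a - G) / (4 * (\<bar>b\<bar> + 1))))"
  have t0: "t > 0" using \<delta> pos n0 by (simp add: t_def G_def)
  have t1: "t \<le> 1" by (simp add: t_def)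
  have t2: "t \<le> \<delta> / (n + 1)" by (simp add: t_def)
  have t3: "t \<le> (a - G) / (4 * (\<bar>b\<bar> + 1))" by (simp add: t_def)
  define y where "y = p + t *\<^sub>R (q - p)"
  have yQ: "y \<in> Q"
  proof -
    have "y = (1 - t) *\<^sub>R p + t *\<^sub>R q" by (simp add: y_def algebra_simps)
    thus ?thesis using cv p q t0 t1 by (simp add: convex_def)
  qed
  have ny: "norm (y - p) = t * n" using t0 by (simp add: y_def n_def)
  have "t * n < \<delta>"
  proof -
    have "t * n \<le> \<delta> / (n + 1) * n" using t2 n0 by (rule mult_right_mono)
    also have "\<dots> < \<delta>" using \<delta> n0 by (simp add: field_simps)
    finally show ?thesis .
  qed
  hence "norm (f y - f p - f' (y - p)) \<le> e * (t * n)" using hd[OF yQ] ny by simp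
  moreover have "f' (y - p) = t * G"
    using bl by (simp add: y_def G_def linear_simps)
  ultimately have "f y - f p \<le> t * G + e * (t * n)" by simp
  moreover have "e * (t * n) \<le> t * ((a - G) / 2)"
  proof -
    have "e * n \<le> (a - G) / 2" using pos n0 by (simp add: e_def G_def field_simps)
    thus ?thesis using t0 by (metis mult.left_commute mult_left_mono less_imp_le)
  qed
  moreover have "t * a - t\<^sup>2 * b \<le> f y - f p" using H[OF t0 t1] by (simp add: y_def)
  ultimately have "t * a - t\<^sup>2 * b \<le> t * G + t * ((a - G) / 2)" by linarith
  hence "t * ((a - G) / 2) \<le> t * (t * b)" by (simp add: power2_eq_square field_simps)
  hence A1: "(a - G) / 2 \<le> t * b" using t0 by simp
  have "t * b \<le> t * \<bar>b\<bar>" using t0 by (simp add: mult_left_mono)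
  also have "\<dots> \<le> (a - G) / (4 * (\<bar>b\<bar> + 1)) * \<bar>b\<bar>" using t3 abs_ge_zero by (rule mult_right_mono)
  also have "\<dots> < (a - G) / 2"
  proof -
    have c: "a - G > 0" using pos by (simp add: G_def)
    have "\<bar>b\<bar> / (\<bar>b\<bar> + 1) \<le> 1" by simp
    hence "(a - G) * (\<bar>b\<bar> / (\<bar>b\<bar> + 1)) \<le> (a - G) * 1" using c by (intro mult_left_mono) auto
    hence "(a - G) / (4 * (\<bar>b\<bar> + 1)) * \<bar>b\<bar> \<le> (a - G) / 4" by (simp add: field_simps)
    moreover have "(a - G) / 4 < (a - G) / 2" using c by simp
    ultimately show ?thesis by (rule order.strict_trans1)
  qed
  finally show False using A1 by simp
qed

theorem lemma7:
  fixes Q :: "'a::euclidean_space set"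
    and d :: "'a \<Rightarrow> real" and gd :: "'a \<Rightarrow> 'a"
    and h :: "'a \<Rightarrow> real"
    and Lk A \<alpha> A' fy :: real
    and xk uk y g u' x' :: 'a
  assumes Q: "convex Q" "closed Q" "bounded Q"
    and h: "convex_on Q h"
    and d_deriv: "\<And>z. z \<in> Q \<Longrightarrow> (d has_derivative (\<lambda>v. inner (gd z) v)) (at z within Q)"
    and d_C1: "continuous_on Q gd"
    and d_sc: "strongly_convex_on Q 1 d"
    and Lk: "Lk > 0" and A: "A \<ge> 0"
    and alpha_root: "A + \<alpha> = Lk * \<alpha>\<^sup>2"
    and alpha_largest: "\<And>\<beta>. A + \<beta> = Lk * \<beta>\<^sup>2 \<Longrightarrow> \<beta> \<le> \<alpha>"
    and A': "A' = A + \<alpha>"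
    and xk: "xk \<in> Q" and uk: "uk \<in> Q"
    and y: "y = (1 / A') *\<^sub>R (\<alpha> *\<^sub>R uk + A *\<^sub>R xk)"
    and u'Q: "u' \<in> Q"
    and u'min: "\<And>z. z \<in> Q \<Longrightarrow>
        bregman d gd u' uk + \<alpha> * (lmodel fy g y u' + h u')
          \<le> bregman d gd z uk + \<alpha> * (lmodel fy g y z + h z)"
    and x': "x' = (1 / A') *\<^sub>R (\<alpha> *\<^sub>R u' + A *\<^sub>R xk)"
  shows "\<forall>x\<in>Q. lmodel fy g y x' + Lk / 2 * (norm (x' - y))\<^sup>2 + h x'
     \<le> A / A' * (lmodel fy g y xk + h xk)
       + \<alpha> / A' * (lmodel fy g y x + h x + 1 / \<alpha> * bregman d gd x uk - 1 / \<alpha> * bregman d gd x u')"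
proof
  fix x assume xQ: "x \<in> Q"
  define lm where "lm = (\<lambda>z. lmodel fy g y z)"
  define V where "V = (\<lambda>a b. bregman d gd a b)"
  have affine: "\<And>s a b. lm ((1 - s) *\<^sub>R a + s *\<^sub>R b) = (1 - s) * lm a + s * lm b"
    by (simp add: lm_def lmodel_def inner_diff_right inner_add_right algebra_simps)
  have convQ: "\<And>s a b. a \<in> Q \<Longrightarrow> b \<in> Q \<Longrightarrow> 0 \<le> s \<Longrightarrow> s \<le> 1 \<Longrightarrow> (1 - s) *\<^sub>R a + s *\<^sub>R b \<in> Q"
    using Q(1) by (simp add: convex_def)
  define r where "r = sqrt (1 + 4 * Lk * A)"
  have r0: "r \<ge> 0" using Lk A by (simp add: r_def)
  have r2: "r\<^sup>2 = 1 + 4 * Lk * A" using Lk A by (simp add: r_def)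
  define \<beta>0 where "\<beta>0 = (1 + r) / (2 * Lk)"
  have "A + \<beta>0 = Lk * \<beta>0\<^sup>2"
    using Lk r2 by (simp add: \<beta>0_def power2_eq_square field_simps)
  hence "\<beta>0 \<le> \<alpha>" by (rule alpha_largest)
  moreover have "\<beta>0 > 0" using Lk r0 by (simp add: \<beta>0_def)
  ultimately have apos: "\<alpha> > 0" by simp
  have A'pos: "A' > 0" using apos A A' by simp
  have A'eq: "A' = Lk * \<alpha>\<^sup>2" using alpha_root A' by simp
  have tp: "\<alpha> * (lm u' + h u') + V u' uk \<le> \<alpha> * (lm x + h x) + V x uk - V x u'"
  proof -
    define a where "a = inner (gd uk) (x - u') - \<alpha> * ((lm x + h x) - (lm u' + h u'))"
    have "a \<le> inner (gd u') (x - u')"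
    proof (rule deriv_lower[OF d_deriv[OF u'Q] Q(1) u'Q xQ, where b = 0])
      fix t :: real assume t0: "0 < t" and t1: "t \<le> 1"
      define z where "z = (1 - t) *\<^sub>R u' + t *\<^sub>R x"
      have zeq: "u' + t *\<^sub>R (x - u') = z" by (simp add: z_def algebra_simps)
      have zQ: "z \<in> Q" using convQ[OF u'Q xQ] t0 t1 by (simp add: z_def)
      have m: "V u' uk + \<alpha> * (lm u' + h u') \<le> V z uk + \<alpha> * (lm z + h z)"
        using u'min[OF zQ] by (simp add: V_def lm_def)
      have lz: "lm z = (1 - t) * lm u' + t * lm x" by (simp add: z_def affine)
      have hz: "h z \<le> (1 - t) * h u' + t * h x"
        using convex_onD[OF h, of t u' x] t0 t1 u'Q xQ by (simp add: z_def)
      have hz': "\<alpha> * h z \<le> \<alpha> * ((1 - t) * h u' + t * h x)" using hz apos by simp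
      have Vz: "V z uk - V u' uk = d z - d u' - t * inner (gd uk) (x - u')"
        by (simp add: V_def bregman_def z_def inner_diff_right inner_add_right algebra_simps)
      have "t * a \<le> d z - d u'"
        using m lz hz' Vz by (simp add: a_def algebra_simps)
      thus "t * a - t\<^sup>2 * 0 \<le> d (u' + t *\<^sub>R (x - u')) - d u'" by (simp add: zeq)
    qed
    moreover have "V x uk - V x u' - V u' uk = inner (gd u' - gd uk) (x - u')"
      by (simp add: V_def bregman_def inner_diff_right inner_diff_left algebra_simps)
    ultimately show ?thesis by (simp add: a_def inner_diff_left algebra_simps)
  qed
  define n where "n = norm (u' - uk)"
  have sc: "n\<^sup>2 / 2 \<le> V u' uk"
  proof -
    have D: "((\<lambda>z. - d z) has_derivative (\<lambda>v. - inner (gd uk) v)) (at uk within Q)"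
      using d_deriv[OF uk] by (rule has_derivative_minus)
    have "- (d u' - d uk - n\<^sup>2 / 2) \<le> - inner (gd uk) (u' - uk)"
    proof (rule deriv_lower[OF D Q(1) uk u'Q, where b = "n\<^sup>2 / 2"])
      fix t :: real assume t0: "0 < t" and t1: "t \<le> 1"
      have zeq: "uk + t *\<^sub>R (u' - uk) = (1 - t) *\<^sub>R uk + t *\<^sub>R u'" by (simp add: algebra_simps)
      have "d ((1 - t) *\<^sub>R uk + t *\<^sub>R u') \<le> (1 - t) * d uk + t * d u' - 1 / 2 * t * (1 - t) * (norm (uk - u'))\<^sup>2"
        using d_sc uk u'Q t0 t1 unfolding strongly_convex_on_def by auto
      moreover have "norm (uk - u') = n" by (simp add: n_def norm_minus_commute)
      ultimately show "t * - (d u' - d uk - n\<^sup>2 / 2) - t\<^sup>2 * (n\<^sup>2 / 2) \<le> - d (uk + t *\<^sub>R (u' - uk)) - - d uk"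
        by (simp add: zeq power2_eq_square algebra_simps add_divide_distrib diff_divide_distrib)
    qed
    thus ?thesis by (simp add: V_def bregman_def)
  qed
  define s where "s = \<alpha> / A'"
  have s1: "1 - s = A / A'" using A'pos A' by (simp add: s_def field_simps)
  have s0: "0 \<le> s" "s \<le> 1" using apos A A' A'pos by (auto simp: s_def)
  have sA: "A / A' = 1 - \<alpha> / A'" using s1 by (simp add: s_def)
  have x'eq: "x' = (1 - s) *\<^sub>R xk + s *\<^sub>R u'"
    using A'pos by (simp add: x' sA s_def scaleR_add_right add.commute)
  have yeq: "y = (1 - s) *\<^sub>R xk + s *\<^sub>R uk"
    using A'pos by (simp add: y sA s_def scaleR_add_right add.commute)
  have "x' - y = s *\<^sub>R (u' - uk)" by (simp add: x'eq yeq algebra_simps)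
  hence "Lk / 2 * (norm (x' - y))\<^sup>2 = Lk / 2 * s\<^sup>2 * n\<^sup>2"
    by (simp add: n_def power_mult_distrib)
  also have "\<dots> = n\<^sup>2 / (2 * A')"
    using A'pos A'eq apos by (simp add: s_def power2_eq_square field_simps)
  finally have nrm: "Lk / 2 * (norm (x' - y))\<^sup>2 = n\<^sup>2 / (2 * A')" .
  have lx': "lm x' = (1 - s) * lm xk + s * lm u'" by (simp add: x'eq affine)
  have hx': "h x' \<le> (1 - s) * h xk + s * h u'"
    using convex_onD[OF h, of s xk u'] s0 xk u'Q by (simp add: x'eq)
  have "lm x' + Lk / 2 * (norm (x' - y))\<^sup>2 + h x'
      \<le> (1 - s) * (lm xk + h xk) + (\<alpha> * (lm u' + h u') + n\<^sup>2 / 2) / A'"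
  proof -
    have e1: "lm x' + Lk / 2 * (norm (x' - y))\<^sup>2 + h x'
        \<le> (1 - s) * (lm xk + h xk) + s * (lm u' + h u') + n\<^sup>2 / (2 * A')"
      using lx' hx' nrm by (simp add: algebra_simps)
    have e2: "s * (lm u' + h u') + n\<^sup>2 / (2 * A') = (\<alpha> * (lm u' + h u') + n\<^sup>2 / 2) / A'"
      using A'pos by (simp add: s_def field_simps)
    from e1 e2 show ?thesis by linarith
  qed
  also have "\<dots> \<le> (1 - s) * (lm xk + h xk) + (\<alpha> * (lm x + h x) + V x uk - V x u') / A'"
    using tp sc A'pos by (simp add: divide_right_mono)
  also have "\<dots> = A / A' * (lm xk + h xk) + \<alpha> / A' * (lm x + h x + 1 / \<alpha> * V x uk - 1 / \<alpha> * V x u')"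
    using apos A'pos by (simp add: s1 field_simps)
  finally show "lmodel fy g y x' + Lk / 2 * (norm (x' - y))\<^sup>2 + h x'
     \<le> A / A' * (lmodel fy g y xk + h xk)
       + \<alpha> / A' * (lmodel fy g y x + h x + 1 / \<alpha> * bregman d gd x uk - 1 / \<alpha> * bregman d gd x u')"
    by (simp add: lm_def V_def)
qed

end
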